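(* Let $n,t_1,t_2$ be positive integers with $t_1\ge t_2$. Then $$R(C_{t_1},Q_n)=n+t_1-1\qquad\text{and}\qquad R(\mathcal{C}_{t_1,t_2},Q_n)=n+t_1+1.$$
   Context: $C_t$ denotes a chain (totally ordered poset) on $t$ elements. The parallel composition $P_1+P_2$ of posets is the disjoint union of a copy of $P_1$ and a copy of $P_2$ in which every element of one is incomparable to every element of the other. The chain composition is $\mathcal{C}_{t_1,\dots,t_\ell}=C_{t_1}+\dots+C_{t_\ell}$ with $t_1\ge\dots\ge t_\ell$. $Q_n$ is the Boolean lattice of all subsets of an $n$-element set ordered by inclusion. A copy of a poset $P$ in $Q$ is an induced subposet of $Q$ isomorphic to $P$. $R(P_1,P_2)$ is the smallest integer $N$ such that every blue/red coloring of the elements of $Q_N$ contains an all-blue copy of $P_1$ or an all-red copy of $P_2$. *)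

theory Defs
  imports Main
begin

type_synonym 'a poset = "'a set \<times> ('a \<Rightarrow> 'a \<Rightarrow> bool)"

definition has_copy :: "'a poset \<Rightarrow> 'b set \<Rightarrow> ('b \<Rightarrow> 'b \<Rightarrow> bool) \<Rightarrow> bool" where
  "has_copy P H le' \<longleftrightarrow>
     (\<exists>f. inj_on f (fst P) \<and> f ` fst P \<subseteq> H \<and>
          (\<forall>x\<in>fst P. \<forall>y\<in>fst P. snd P x y \<longleftrightarrow> le' (f x) (f y)))"

definition boolean_lattice :: "nat \<Rightarrow> nat set poset" ("Q") where
  "Q n = (Pow {..<n}, (\<subseteq>))"

definition chain_poset :: "nat \<Rightarrow> nat poset" ("C") where
  "C t = ({..<t}, (\<le>))"

definition parallel :: "'a poset \<Rightarrow> 'b poset \<Rightarrow> ('a + 'b) poset" where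
  "parallel P1 P2 = (Inl ` fst P1 \<union> Inr ` fst P2,
     (\<lambda>u v. case (u, v) of
        (Inl a, Inl b) \<Rightarrow> snd P1 a b
      | (Inr a, Inr b) \<Rightarrow> snd P2 a b
      | _ \<Rightarrow> False))"

text \<open>Ramsey property: every blue/red colouring (True = blue) of Q_N contains
  an all-blue copy of P1 or an all-red copy of P2.\<close>
definition ramsey_prop :: "'a poset \<Rightarrow> 'b poset \<Rightarrow> nat \<Rightarrow> bool" where
  "ramsey_prop P1 P2 N \<longleftrightarrow>
     (\<forall>col :: nat set \<Rightarrow> bool.
        has_copy P1 {S \<in> fst (Q N). col S} (snd (Q N)) \<or>
        has_copy P2 {S \<in> fst (Q N). \<not> col S} (snd (Q N)))"

definition poset_ramsey :: "'a poset \<Rightarrow> 'b poset \<Rightarrow> nat" where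
  "poset_ramsey P1 P2 = (LEAST N. ramsey_prop P1 P2 N)"

end

theory Submission
  imports Defs
begin

definition chainP :: "(nat set \<Rightarrow> bool) \<Rightarrow> nat set \<Rightarrow> nat \<Rightarrow> bool" where
  "chainP col v k \<longleftrightarrow> (\<exists>g. (\<forall>i<k. g i \<subseteq> v \<and> col (g i)) \<and> (\<forall>i j. i < j \<longrightarrow> j < k \<longrightarrow> g i \<subset> g j))"

lemma chainP_mono: "chainP col v k \<Longrightarrow> v \<subseteq> w \<Longrightarrow> k' \<le> k \<Longrightarrow> chainP col w k'"
proof -
  assume a: "chainP col v k" "v \<subseteq> w" "k' \<le> k"
  then obtain g where g: "\<forall>i<k. g i \<subseteq> v \<and> col (g i)" "\<forall>i j. i < j \<longrightarrow> j < k \<longrightarrow> g i \<subset> g j"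
    unfolding chainP_def by blast
  have "\<forall>i<k'. g i \<subseteq> w \<and> col (g i)" using g(1) a(2,3) by (meson less_le_trans order_trans)
  moreover have "\<forall>i j. i < j \<longrightarrow> j < k' \<longrightarrow> g i \<subset> g j" using g(2) a(3) by auto
  ultimately show ?thesis unfolding chainP_def by blast
qed

lemma chainP_ext:
  assumes "chainP col v k" "v \<subset> w" "col w"
  shows "chainP col w (Suc k)"
proof -
  obtain g where g: "\<forall>i<k. g i \<subseteq> v \<and> col (g i)" "\<forall>i j. i < j \<longrightarrow> j < k \<longrightarrow> g i \<subset> g j"
    using assms(1) unfolding chainP_def by blast
  let ?g = "g(k := w)"
  have "\<forall>i<Suc k. ?g i \<subseteq> w \<and> col (?g i)"
    using g(1) assms by (auto simp: less_Suc_eq)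
  moreover have "\<forall>i j. i < j \<longrightarrow> j < Suc k \<longrightarrow> ?g i \<subset> ?g j"
  proof (intro allI impI)
    fix i j assume "i < j" "j < Suc k"
    show "?g i \<subset> ?g j"
    proof (cases "j = k")
      case True
      then show ?thesis using g(1) \<open>i<j\<close> assms(2) by auto
    next
      case False
      then show ?thesis using g(2) \<open>i<j\<close> \<open>j < Suc k\<close> by auto
    qed
  qed
  ultimately show ?thesis unfolding chainP_def by blast
qed

lemma key:
  fixes col :: "nat set \<Rightarrow> bool" and n t :: nat
  assumes "t \<ge> 1"
  shows "chainP col {..<n+t-1} t
        \<or> (\<exists>f. (\<forall>S. S \<subseteq> {..<n} \<longrightarrow> f S \<subseteq> {..<n+t-1} \<and> \<not> col (f S))
              \<and> (\<forall>S T. S \<subseteq> {..<n} \<longrightarrow> T \<subseteq> {..<n} \<longrightarrow> (S \<subseteq> T \<longleftrightarrow> f S \<subseteq> f T)))"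
proof (cases "chainP col {..<n+t-1} t")
  case True then show ?thesis by blast
next
  case False
  define Y where "Y i = {n..<n+i}" for i
  define h where "h S = (LEAST i. \<not> chainP col (S \<union> Y i) (Suc i))" for S
  have ex: "\<not> chainP col (S \<union> Y (t-1)) (Suc (t-1))" if "S \<subseteq> {..<n}" for S
  proof
    assume "chainP col (S \<union> Y (t-1)) (Suc (t-1))"
    moreover have "S \<union> Y (t-1) \<subseteq> {..<n+t-1}" using that Y_def assms by auto
    ultimately have "chainP col {..<n+t-1} t" using assms chainP_mono by fastforce
    then show False using False by blast
  qed
  have hle: "h S \<le> t - 1" if "S \<subseteq> {..<n}" for S
    unfolding h_def using ex[OF that] by (rule Least_le)
  have hP: "\<not> chainP col (S \<union> Y (h S)) (Suc (h S))" if "S \<subseteq> {..<n}" for S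
    unfolding h_def using ex[OF that] by (rule LeastI)
  have hmono: "h S \<le> h T" if "S \<subseteq> T" "T \<subseteq> {..<n}" for S T
  proof -
    have "\<not> chainP col (S \<union> Y (h T)) (Suc (h T))"
      using hP[OF that(2)] chainP_mono that(1) by (metis Un_mono order_refl)
    then show ?thesis unfolding h_def by (rule Least_le)
  qed
  have red: "\<not> col (S \<union> Y (h S))" if S: "S \<subseteq> {..<n}" for S
  proof
    assume c: "col (S \<union> Y (h S))"
    show False
    proof (cases "h S")
      case 0
      have "chainP col (S \<union> Y (h S)) 1"
        unfolding chainP_def using c by (rule_tac x="\<lambda>_. S \<union> Y (h S)" in exI) auto
      then show False using hP[OF S] 0 by simp
    next
      case (Suc i)
      have "chainP col (S \<union> Y i) (Suc i)"
        using not_less_Least[of i "\<lambda>i. \<not> chainP col (S \<union> Y i) (Suc i)"] Suc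
        unfolding h_def by auto
      moreover have "S \<union> Y i \<subset> S \<union> Y (h S)"
      proof -
        have "n + i \<in> S \<union> Y (h S)" using Suc Y_def by auto
        moreover have "n + i \<notin> S \<union> Y i" using S Y_def by auto
        moreover have "S \<union> Y i \<subseteq> S \<union> Y (h S)" using Suc Y_def by auto
        ultimately show ?thesis by blast
      qed
      ultimately have "chainP col (S \<union> Y (h S)) (Suc (Suc i))"
        using c chainP_ext by blast
      then show False using hP[OF S] Suc by simp
    qed
  qed
  define f where "f S = S \<union> Y (h S)" for S
  have "\<forall>S. S \<subseteq> {..<n} \<longrightarrow> f S \<subseteq> {..<n+t-1} \<and> \<not> col (f S)"
  proof (intro allI impI conjI)
    fix S assume S: "S \<subseteq> {..<n}"
    show "f S \<subseteq> {..<n+t-1}" using hle[OF S] S assms unfolding f_def Y_def by auto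
    show "\<not> col (f S)" using red[OF S] unfolding f_def .
  qed
  moreover have "\<forall>S T. S \<subseteq> {..<n} \<longrightarrow> T \<subseteq> {..<n} \<longrightarrow> (S \<subseteq> T \<longleftrightarrow> f S \<subseteq> f T)"
  proof (intro allI impI iffI)
    fix S T assume S: "S \<subseteq> {..<n}" and T: "T \<subseteq> {..<n}"
    { assume "S \<subseteq> T"
      then have "h S \<le> h T" using hmono T by blast
      then show "f S \<subseteq> f T" using \<open>S \<subseteq> T\<close> unfolding f_def Y_def by auto }
    { assume "f S \<subseteq> f T"
      then show "S \<subseteq> T" using S unfolding f_def Y_def by (simp add: subset_iff) (meson not_le) }
  qed
  ultimately show ?thesis by blast
qed

lemma chain_card:
  fixes c :: "nat \<Rightarrow> nat set"
  assumes "\<forall>i j. i<j \<longrightarrow> j<k \<longrightarrow> c i \<subset> c j" "\<forall>i<k. finite (c i) \<and> card (c i) \<in> R" "finite R"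
  shows "k \<le> card R"
proof -
  have lt: "card (c i) < card (c j)" if "i < j" "j < k" for i j
    using assms(1) assms(2) that psubset_card_mono by (meson less_trans)
  have "inj_on (\<lambda>i. card (c i)) {..<k}"
  proof (rule inj_onI)
    fix i j assume ij: "i \<in> {..<k}" "j \<in> {..<k}" "card (c i) = card (c j)"
    show "i = j"
    proof (rule ccontr)
      assume "i \<noteq> j"
      then consider "i < j" | "j < i" by linarith
      then show False
      proof cases
        case 1 then show False using lt[of i j] ij by simp
      next
        case 2 then show False using lt[of j i] ij by simp
      qed
    qed
  qed
  moreover have "(\<lambda>i. card (c i)) ` {..<k} \<subseteq> R" using assms(2) by auto
  ultimately have "card {..<k} \<le> card R" using card_inj_on_le assms(3) by blast
  then show ?thesis by simp
qed

lemma copyC_chain: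
  assumes "has_copy (C t) H (\<subseteq>)"
  shows "\<exists>c. (\<forall>i<t. c i \<in> H) \<and> (\<forall>i j. i<j \<longrightarrow> j<t \<longrightarrow> c i \<subset> c j)"
proof -
  obtain f where f: "inj_on f {..<t}" "f ` {..<t} \<subseteq> H" "\<forall>x<t. \<forall>y<t. x \<le> y \<longleftrightarrow> f x \<subseteq> f y"
    using assms unfolding has_copy_def chain_poset_def by auto
  have "\<forall>i j. i<j \<longrightarrow> j<t \<longrightarrow> f i \<subset> f j"
  proof (intro allI impI)
    fix i j :: nat assume ij: "i < j" "j < t"
    have "i < t" using ij by simp
    then have "f i \<subseteq> f j" using f(3)[rule_format, of i j] ij by simp
    moreover have "f i \<noteq> f j" using inj_onD[OF f(1), of i j] ij by auto
    ultimately show "f i \<subset> f j" by blast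
  qed
  then show ?thesis using f(2) by blast
qed

lemma chain_copyC:
  assumes "\<forall>i<t. c i \<in> H" "\<forall>i j. i<j \<longrightarrow> j<t \<longrightarrow> c i \<subset> c j"
  shows "has_copy (C t) H (\<subseteq>)"
  unfolding has_copy_def chain_poset_def
proof (rule exI[of _ c], intro conjI)
  have ord: "(x \<le> y) = (c x \<subseteq> c y)" if "x < t" "y < t" for x y
  proof
    assume "x \<le> y" then show "c x \<subseteq> c y" using assms(2)[rule_format, of x y] that by (cases "x = y") auto
  next
    assume h: "c x \<subseteq> c y"
    show "x \<le> y"
    proof (rule ccontr)
      assume "\<not> x \<le> y"
      then have "c y \<subset> c x" using assms(2)[rule_format, of y x] that by simp
      then show False using h by blast
    qed
  qed
  show "inj_on c (fst ({..<t::nat}, (\<le>)))"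
  proof (rule inj_onI)
    fix x y assume "x \<in> fst ({..<t::nat}, (\<le>))" "y \<in> fst ({..<t::nat}, (\<le>))" "c x = c y"
    then show "x = y" using ord[of x y] ord[of y x] by simp
  qed
  show "c ` fst ({..<t}, (\<le>)) \<subseteq> H" using assms(1) by auto
  show "\<forall>x\<in>fst ({..<t}, (\<le>)). \<forall>y\<in>fst ({..<t}, (\<le>)). snd ({..<t::nat}, (\<le>)) x y = (c x \<subseteq> c y)"
    using ord by simp
qed

lemma copyQ_chain:
  assumes "has_copy (Q n) H (\<subseteq>)"
  shows "\<exists>c. (\<forall>i<Suc n. c i \<in> H) \<and> (\<forall>i j. i<j \<longrightarrow> j<Suc n \<longrightarrow> c i \<subset> c j)"
proof -
  obtain f where f: "f ` Pow {..<n} \<subseteq> H" "\<forall>x\<in>Pow {..<n}. \<forall>y\<in>Pow {..<n}. x \<subseteq> y \<longleftrightarrow> f x \<subseteq> f y"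
    using assms unfolding has_copy_def boolean_lattice_def by auto
  define c where "c i = f {..<i}" for i
  have "\<forall>i<Suc n. c i \<in> H" using f(1) c_def by auto
  moreover have "\<forall>i j. i<j \<longrightarrow> j<Suc n \<longrightarrow> c i \<subset> c j"
  proof (intro allI impI)
    fix i j :: nat assume ij: "i < j" "j < Suc n"
    have P: "{..<i} \<in> Pow {..<n}" "{..<j} \<in> Pow {..<n}" using ij by auto
    have "{..<i} \<subseteq> {..<j}" "\<not> {..<j} \<subseteq> {..<i}" using ij by auto
    then show "c i \<subset> c j" using f(2) P unfolding c_def by blast
  qed
  ultimately show ?thesis by blast
qed


lemma embed_copyQ:
  assumes "\<forall>S. S \<subseteq> {..<n} \<longrightarrow> f S \<in> H"
    "\<forall>S T. S \<subseteq> {..<n} \<longrightarrow> T \<subseteq> {..<n} \<longrightarrow> (S \<subseteq> T \<longleftrightarrow> f S \<subseteq> f T)"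
  shows "has_copy (Q n) H (\<subseteq>)"
  unfolding has_copy_def boolean_lattice_def
proof (rule exI[of _ f], intro conjI)
  show "inj_on f (fst (Pow {..<n}, (\<subseteq>)))"
    unfolding inj_on_def using assms(2) by (metis Pow_iff fst_conv subset_antisym order_refl)
  show "f ` fst (Pow {..<n}, (\<subseteq>)) \<subseteq> H" using assms(1) by auto
  show "\<forall>x\<in>fst (Pow {..<n}, (\<subseteq>)). \<forall>y\<in>fst (Pow {..<n}, (\<subseteq>)). snd (Pow {..<n}, (\<subseteq>)) x y = (f x \<subseteq> f y)"
    using assms(2) by auto
qed

lemma Q_simps: "fst (Q N) = Pow {..<N}" "snd (Q N) = (\<subseteq>)"
  by (auto simp: boolean_lattice_def)

lemma partA_upper:
  assumes "t \<ge> 1"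
  shows "ramsey_prop (C t) (Q n) (n + t - 1)"
  unfolding ramsey_prop_def Q_simps
proof
  fix col :: "nat set \<Rightarrow> bool"
  let ?m = "n + t - 1"
  from key[OF assms, of col n]
  show "has_copy (C t) {S \<in> Pow {..<?m}. col S} (\<subseteq>) \<or> has_copy (Q n) {S \<in> Pow {..<?m}. \<not> col S} (\<subseteq>)"
  proof
    assume "chainP col {..<?m} t"
    then obtain g where g: "\<forall>i<t. g i \<subseteq> {..<?m} \<and> col (g i)" "\<forall>i j. i < j \<longrightarrow> j < t \<longrightarrow> g i \<subset> g j"
      unfolding chainP_def by blast
    have "has_copy (C t) {S \<in> Pow {..<?m}. col S} (\<subseteq>)"
      by (rule chain_copyC[of t g]) (use g in auto)
    then show ?thesis by blast
  next
    assume "\<exists>f. (\<forall>S. S \<subseteq> {..<n} \<longrightarrow> f S \<subseteq> {..<?m} \<and> \<not> col (f S))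
              \<and> (\<forall>S T. S \<subseteq> {..<n} \<longrightarrow> T \<subseteq> {..<n} \<longrightarrow> (S \<subseteq> T \<longleftrightarrow> f S \<subseteq> f T))"
    then obtain f where f: "\<forall>S. S \<subseteq> {..<n} \<longrightarrow> f S \<subseteq> {..<?m} \<and> \<not> col (f S)"
      "\<forall>S T. S \<subseteq> {..<n} \<longrightarrow> T \<subseteq> {..<n} \<longrightarrow> (S \<subseteq> T \<longleftrightarrow> f S \<subseteq> f T)" by blast
    have "has_copy (Q n) {S \<in> Pow {..<?m}. \<not> col S} (\<subseteq>)"
      by (rule embed_copyQ[of n f]) (use f in auto)
    then show ?thesis by blast
  qed
qed

lemma red_bound:
  assumes "has_copy (Q n) {S \<in> Pow {..<N}. P (card S)} (\<subseteq>)" "finite R" "\<And>k. P k \<Longrightarrow> k \<le> N \<Longrightarrow> k \<in> R"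
  shows "Suc n \<le> card R"
proof -
  obtain c where c: "\<forall>i<Suc n. c i \<in> {S \<in> Pow {..<N}. P (card S)}" "\<forall>i j. i<j \<longrightarrow> j<Suc n \<longrightarrow> c i \<subset> c j"
    using copyQ_chain[OF assms(1)] by blast
  have "\<forall>i<Suc n. finite (c i) \<and> card (c i) \<in> R"
  proof (intro allI impI conjI)
    fix i assume "i < Suc n"
    then have ci: "c i \<subseteq> {..<N}" "P (card (c i))" using c(1) by auto
    then show "finite (c i)" using finite_subset by blast
    have "card (c i) \<le> N" using card_mono[OF _ ci(1)] by simp
    then show "card (c i) \<in> R" using assms(3) ci(2) by blast
  qed
  then show ?thesis using chain_card[OF c(2) _ assms(2)] by blast
qed

lemma partA_lower:
  assumes "t \<ge> 1" "N < n + t - 1"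
  shows "\<not> ramsey_prop (C t) (Q n) N"
proof
  assume R: "ramsey_prop (C t) (Q n) N"
  have H: "has_copy (C t) {S \<in> Pow {..<N}. card S + 1 < t} (\<subseteq>) \<or>
      has_copy (Q n) {S \<in> Pow {..<N}. \<not> (card S + 1 < t)} (\<subseteq>)"
    using spec[OF R[unfolded ramsey_prop_def Q_simps], of "\<lambda>S. card S + 1 < t"] by simp
  then show False
  proof
    assume hc: "has_copy (C t) {S \<in> Pow {..<N}. card S + 1 < t} (\<subseteq>)"
    obtain c where c: "\<forall>i<t. c i \<in> {S \<in> Pow {..<N}. card S + 1 < t}" "\<forall>i j. i<j \<longrightarrow> j<t \<longrightarrow> c i \<subset> c j"
      using copyC_chain[OF hc] by blast
    have cc: "\<forall>i<t. finite (c i) \<and> card (c i) \<in> {..<t-1}"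
    proof (intro allI impI conjI)
      fix i assume "i < t"
      then have ci: "c i \<subseteq> {..<N}" "card (c i) + 1 < t" using c(1) by auto
      show "finite (c i)" using ci(1) finite_subset by blast
      show "card (c i) \<in> {..<t-1}" using ci(2) by simp
    qed
    have "t \<le> card {..<t-1}" by (rule chain_card[OF c(2) cc finite_lessThan])
    then show False using assms(1) by simp
  next
    assume hq: "has_copy (Q n) {S \<in> Pow {..<N}. \<not> (card S + 1 < t)} (\<subseteq>)"
    have "Suc n \<le> card {t-1..N}"
    proof (rule red_bound[where P="\<lambda>k. \<not> (k + 1 < t)"])
      show "has_copy (Q n) {S \<in> Pow {..<N}. \<not> (card S + 1 < t)} (\<subseteq>)" by (rule hq)
      show "finite {t-1..N}" by simp
      show "\<And>k. \<not> (k + 1 < t) \<Longrightarrow> k \<le> N \<Longrightarrow> k \<in> {t-1..N}" by simp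
    qed
    moreover have "card {t-1..N} = Suc N - (t - 1)" by simp
    ultimately show False using assms by linarith
  qed
qed

lemma ins_sub: "m \<notin> X \<Longrightarrow> m \<notin> Y \<Longrightarrow> (insert m X \<subseteq> insert m Y) = (X \<subseteq> Y)"
  by auto

lemma half:
  assumes "t1 \<ge> 1" "a \<ge> n + t1 - 1" "a < N"
  shows "(\<exists>g. (\<forall>i<t1. g i \<subseteq> {..<n+t1-1} \<and> col (insert a (g i))) \<and> (\<forall>i j. i < j \<longrightarrow> j < t1 \<longrightarrow> g i \<subset> g j))
     \<or> has_copy (Q n) {S \<in> Pow {..<N}. \<not> col S} (\<subseteq>)"
proof -
  let ?m = "n + t1 - 1"
  from key[OF assms(1), of "\<lambda>S. col (insert a S)" n]
  show ?thesis
  proof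
    assume "chainP (\<lambda>S. col (insert a S)) {..<?m} t1"
    then show ?thesis unfolding chainP_def by blast
  next
    assume "\<exists>f. (\<forall>S. S \<subseteq> {..<n} \<longrightarrow> f S \<subseteq> {..<?m} \<and> \<not> col (insert a (f S)))
              \<and> (\<forall>S T. S \<subseteq> {..<n} \<longrightarrow> T \<subseteq> {..<n} \<longrightarrow> (S \<subseteq> T \<longleftrightarrow> f S \<subseteq> f T))"
    then obtain f where f: "\<forall>S. S \<subseteq> {..<n} \<longrightarrow> f S \<subseteq> {..<?m} \<and> \<not> col (insert a (f S))"
      "\<forall>S T. S \<subseteq> {..<n} \<longrightarrow> T \<subseteq> {..<n} \<longrightarrow> (S \<subseteq> T \<longleftrightarrow> f S \<subseteq> f T)" by blast
    have fs: "f S \<subseteq> {..<?m}" "\<not> col (insert a (f S))" if "S \<subseteq> {..<n}" for S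
      using f(1) that by blast+
    have na: "a \<notin> f S" if "S \<subseteq> {..<n}" for S using fs(1)[OF that] assms(2) by auto
    have "has_copy (Q n) {S \<in> Pow {..<N}. \<not> col S} (\<subseteq>)"
    proof (rule embed_copyQ[of n "\<lambda>S. insert a (f S)"])
      show "\<forall>S. S \<subseteq> {..<n} \<longrightarrow> insert a (f S) \<in> {S \<in> Pow {..<N}. \<not> col S}"
      proof (intro allI impI)
        fix S assume S: "S \<subseteq> {..<n}"
        have "f S \<subseteq> {..<N}" using fs(1)[OF S] assms(2,3) by auto
        then show "insert a (f S) \<in> {S \<in> Pow {..<N}. \<not> col S}" using fs(2)[OF S] assms(3) by auto
      qed
      show "\<forall>S T. S \<subseteq> {..<n} \<longrightarrow> T \<subseteq> {..<n} \<longrightarrow> (S \<subseteq> T) = (insert a (f S) \<subseteq> insert a (f T))"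
      proof (intro allI impI)
        fix S T assume S: "S \<subseteq> {..<n}" and T: "T \<subseteq> {..<n}"
        have "(insert a (f S) \<subseteq> insert a (f T)) = (f S \<subseteq> f T)" by (rule ins_sub[OF na[OF S] na[OF T]])
        then show "(S \<subseteq> T) = (insert a (f S) \<subseteq> insert a (f T))" using f(2) S T by simp
      qed
    qed
    then show ?thesis by blast
  qed
qed

lemma partB_upper:
  assumes "t1 \<ge> 1" "t2 \<le> t1"
  shows "ramsey_prop (parallel (C t1) (C t2)) (Q n) (n + t1 + 1)"
  unfolding ramsey_prop_def Q_simps
proof
  fix col :: "nat set \<Rightarrow> bool"
  let ?m = "n + t1 - 1" and ?N = "n + t1 + 1"
  let ?H = "{S \<in> Pow {..<?N}. col S}"
  show "has_copy (parallel (C t1) (C t2)) ?H (\<subseteq>) \<or> has_copy (Q n) {S \<in> Pow {..<?N}. \<not> col S} (\<subseteq>)"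
  proof (cases "has_copy (Q n) {S \<in> Pow {..<?N}. \<not> col S} (\<subseteq>)")
    case True then show ?thesis by blast
  next
    case False
    have hA: "?m \<ge> n + t1 - 1" "?m < ?N" by simp_all
    obtain gA where gA: "\<forall>i<t1. gA i \<subseteq> {..<?m} \<and> col (insert ?m (gA i))" "\<forall>i j. i < j \<longrightarrow> j < t1 \<longrightarrow> gA i \<subset> gA j"
      using half[OF assms(1) hA, of col] False by blast
    have hB: "Suc ?m \<ge> n + t1 - 1" "Suc ?m < ?N" using assms(1) by simp_all
    obtain gB where gB: "\<forall>i<t1. gB i \<subseteq> {..<?m} \<and> col (insert (Suc ?m) (gB i))" "\<forall>i j. i < j \<longrightarrow> j < t1 \<longrightarrow> gB i \<subset> gB j"
      using half[OF assms(1) hB, of col] False by blast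
    define F where "F x = (case x of Inl i \<Rightarrow> insert ?m (gA i) | Inr j \<Rightarrow> insert (Suc ?m) (gB j))" for x
    have Fl: "F (Inl i) = insert ?m (gA i)" and Fr: "F (Inr j) = insert (Suc ?m) (gB j)" for i j
      unfolding F_def by auto
    have nA: "?m \<notin> gA i" "Suc ?m \<notin> gA i" if "i < t1" for i
    proof -
      have "gA i \<subseteq> {..<?m}" using gA(1) that by blast
      then show "?m \<notin> gA i" "Suc ?m \<notin> gA i" using assms(1) by auto
    qed
    have nB: "?m \<notin> gB i" "Suc ?m \<notin> gB i" if "i < t1" for i
    proof -
      have "gB i \<subseteq> {..<?m}" using gB(1) that by blast
      then show "?m \<notin> gB i" "Suc ?m \<notin> gB i" using assms(1) by auto
    qed
    have ordA: "(i \<le> j) = (gA i \<subseteq> gA j)" if "i < t1" "j < t1" for i j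
    proof
      assume "i \<le> j" then show "gA i \<subseteq> gA j" using gA(2) that le_neq_implies_less[of i j] by (cases "i = j") blast+
    next
      assume "gA i \<subseteq> gA j"
      show "i \<le> j"
      proof (rule ccontr)
        assume "\<not> i \<le> j"
        then have "j < i" by simp
        then have "gA j \<subset> gA i" using gA(2) that by blast
        then show False using \<open>gA i \<subseteq> gA j\<close> by blast
      qed
    qed
    have ordB: "(i \<le> j) = (gB i \<subseteq> gB j)" if "i < t1" "j < t1" for i j
    proof
      assume "i \<le> j" then show "gB i \<subseteq> gB j" using gB(2) that le_neq_implies_less[of i j] by (cases "i = j") blast+
    next
      assume "gB i \<subseteq> gB j"
      show "i \<le> j"
      proof (rule ccontr)
        assume "\<not> i \<le> j"
        then have "j < i" by simp
        then have "gB j \<subset> gB i" using gB(2) that by blast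
        then show False using \<open>gB i \<subseteq> gB j\<close> by blast
      qed
    qed
    let ?D = "Inl ` {..<t1} \<union> Inr ` {..<t2}"
    let ?rel = "\<lambda>x y. (case (x, y) of (Inl a, Inl b) \<Rightarrow> a \<le> b | (Inr a, Inr b) \<Rightarrow> a \<le> b | _ \<Rightarrow> False)"
    have ord: "?rel x y = (F x \<subseteq> F y)" if x: "x \<in> ?D" and y: "y \<in> ?D" for x y
    proof -
      consider (ll) i j where "x = Inl i" "y = Inl j" "i < t1" "j < t1"
        | (lr) i j where "x = Inl i" "y = Inr j" "i < t1" "j < t1"
        | (rl) i j where "x = Inr i" "y = Inl j" "i < t1" "j < t1"
        | (rr) i j where "x = Inr i" "y = Inr j" "i < t1" "j < t1"
        using x y assms(2) by auto
      then show ?thesis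
      proof cases
        case ll
        have e: "(F x \<subseteq> F y) = (gA i \<subseteq> gA j)" unfolding ll(1,2) Fl
          by (rule ins_sub[OF nA(1)[OF ll(3)] nA(1)[OF ll(4)]])
        then show ?thesis using ordA[OF ll(3,4)] ll by simp
      next
        case lr then show ?thesis using nB[of j] by (auto simp: Fl Fr)
      next
        case rl then show ?thesis using nA[of j] by (auto simp: Fl Fr)
      next
        case rr
        have e: "(F x \<subseteq> F y) = (gB i \<subseteq> gB j)" unfolding rr(1,2) Fr
          by (rule ins_sub[OF nB(2)[OF rr(3)] nB(2)[OF rr(4)]])
        then show ?thesis using ordB[OF rr(3,4)] rr by simp
      qed
    qed
    have "has_copy (parallel (C t1) (C t2)) ?H (\<subseteq>)"
      unfolding has_copy_def parallel_def chain_poset_def fst_conv snd_conv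
    proof (rule exI[of _ F], intro conjI ballI)
      show "inj_on F ?D"
      proof (rule inj_onI)
        fix x y assume x: "x \<in> ?D" and y: "y \<in> ?D" and e: "F x = F y"
        then have "?rel x y" "?rel y x" using ord[OF x y] ord[OF y x] by auto
        then show "x = y" by (auto split: sum.splits)
      qed
      show "F ` ?D \<subseteq> ?H"
      proof
        fix z assume "z \<in> F ` ?D"
        then obtain x where x: "x \<in> ?D" "z = F x" by blast
        then consider i where "x = Inl i" "i < t1" | j where "x = Inr j" "j < t1"
          using assms(2) by auto
        then show "z \<in> ?H"
        proof cases
          case 1
          have "gA i \<subseteq> {..<?m}" "col (insert ?m (gA i))" using gA(1) 1(2) by blast+
          then show ?thesis using x(2) 1(1) Fl assms(1) by auto
        next
          case 2
          have "gB j \<subseteq> {..<?m}" "col (insert (Suc ?m) (gB j))" using gB(1) 2(2) by blast+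
          then show ?thesis using x(2) 2(1) Fr assms(1) by auto
        qed
      qed
      fix x y assume x: "x \<in> ?D" and y: "y \<in> ?D"
      show "?rel x y = (F x \<subseteq> F y)" by (rule ord[OF x y])
    qed
    then show ?thesis by blast
  qed
qed


lemma partB_lower:
  assumes "t1 \<ge> 1" "t2 \<ge> 1" "N < n + t1 + 1"
  shows "\<not> ramsey_prop (parallel (C t1) (C t2)) (Q n) N"
proof
  let ?col = "\<lambda>S. card S < t1 \<or> N \<le> card S"
  assume R: "ramsey_prop (parallel (C t1) (C t2)) (Q n) N"
  have H: "has_copy (parallel (C t1) (C t2)) {S \<in> Pow {..<N}. ?col S} (\<subseteq>) \<or>
      has_copy (Q n) {S \<in> Pow {..<N}. \<not> ?col S} (\<subseteq>)"
    using spec[OF R[unfolded ramsey_prop_def Q_simps], of ?col] by simp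
  then show False
  proof
    assume hc: "has_copy (parallel (C t1) (C t2)) {S \<in> Pow {..<N}. ?col S} (\<subseteq>)"
    let ?D = "Inl ` {..<t1} \<union> Inr ` {..<t2}"
    let ?H = "{S \<in> Pow {..<N}. ?col S}"
    let ?rel = "\<lambda>x y. (case (x, y) of (Inl a, Inl b) \<Rightarrow> a \<le> b | (Inr a, Inr b) \<Rightarrow> a \<le> b | _ \<Rightarrow> False)"
    have ex: "\<exists>f. inj_on f ?D \<and> f ` ?D \<subseteq> ?H \<and> (\<forall>x\<in>?D. \<forall>y\<in>?D. ?rel x y = (f x \<subseteq> f y))"
      using hc unfolding has_copy_def parallel_def chain_poset_def fst_conv snd_conv .
    then obtain f where f: "inj_on f ?D" "f ` ?D \<subseteq> ?H" "\<forall>x\<in>?D. \<forall>y\<in>?D. ?rel x y = (f x \<subseteq> f y)"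
      by (elim exE conjE) (rule that)
    define c where "c i = f (Inl i)" for i
    have r0: "Inr 0 \<in> Inl ` {..<t1} \<union> Inr ` {..<t2}" using assms(2) by auto
    have li: "Inl i \<in> Inl ` {..<t1} \<union> (Inr ` {..<t2} :: (nat + nat) set)" if "i < t1" for i
      using that by auto
    have chain: "\<forall>i j. i<j \<longrightarrow> j<t1 \<longrightarrow> c i \<subset> c j"
    proof (intro allI impI)
      fix i j :: nat assume ij: "i < j" "j < t1"
      have ii: "Inl i \<in> Inl ` {..<t1} \<union> (Inr ` {..<t2} :: (nat + nat) set)" and jj: "Inl j \<in> Inl ` {..<t1} \<union> (Inr ` {..<t2} :: (nat + nat) set)"
        using ij by auto
      have "c i \<subseteq> c j" using bspec[OF bspec[OF f(3) ii] jj] ij unfolding c_def by simp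
      moreover have "c i \<noteq> c j" using inj_onD[OF f(1) _ ii jj] ij unfolding c_def by auto
      ultimately show "c i \<subset> c j" by blast
    qed
    have inc1: "\<not> c i \<subseteq> f (Inr 0)" and inc2: "\<not> f (Inr 0) \<subseteq> c i" if "i < t1" for i
      using bspec[OF bspec[OF f(3) li[OF that]] r0] bspec[OF bspec[OF f(3) r0] li[OF that]] unfolding c_def by simp_all
    have "\<forall>i<t1. finite (c i) \<and> card (c i) \<in> {1..<t1}"
    proof (intro allI impI conjI)
      fix i assume i: "i < t1"
      have ci: "c i \<subseteq> {..<N}" "?col (c i)" using f(2) li[OF i] unfolding c_def by auto
      have fr: "f (Inr 0) \<subseteq> {..<N}" using f(2) r0 by auto
      show fin: "finite (c i)" using ci(1) finite_subset by blast
      have "c i \<noteq> {}" using inc1[OF i] by blast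
      then have "card (c i) \<noteq> 0" using fin by simp
      moreover have "\<not> N \<le> card (c i)"
      proof
        assume "N \<le> card (c i)"
        then have "card {..<N} \<le> card (c i)" by simp
        then have "c i = {..<N}" using card_subset_eq ci(1) card_mono[OF _ ci(1)] by (metis finite_lessThan le_antisym)
        then show False using inc2[OF i] fr by simp
      qed
      ultimately show "card (c i) \<in> {1..<t1}" using ci(2) by auto
    qed
    then have "t1 \<le> card {1..<t1}" by (rule chain_card[OF chain _ finite_atLeastLessThan])
    then show False using assms(1) by simp
  next
    assume hq: "has_copy (Q n) {S \<in> Pow {..<N}. \<not> ?col S} (\<subseteq>)"
    have "Suc n \<le> card {t1..<N}"
    proof (rule red_bound[where P="\<lambda>k. \<not> (k < t1 \<or> N \<le> k)"])
      show "has_copy (Q n) {S \<in> Pow {..<N}. \<not> (card S < t1 \<or> N \<le> card S)} (\<subseteq>)" by (rule hq)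
      show "finite {t1..<N}" by simp
      show "\<And>k. \<not> (k < t1 \<or> N \<le> k) \<Longrightarrow> k \<le> N \<Longrightarrow> k \<in> {t1..<N}" by simp
    qed
    then show False using assms by simp
  qed
qed

theorem theorem5:
  fixes n t1 t2 :: nat
  assumes "n \<ge> 1" and "t1 \<ge> 1" and "t2 \<ge> 1" and "t1 \<ge> t2"
  shows "poset_ramsey (C t1) (Q n) = n + t1 - 1
       \<and> poset_ramsey (parallel (C t1) (C t2)) (Q n) = n + t1 + 1"
proof
  show "poset_ramsey (C t1) (Q n) = n + t1 - 1"
    unfolding poset_ramsey_def
  proof (rule Least_equality)
    show "ramsey_prop (C t1) (Q n) (n + t1 - 1)" using partA_upper assms(2) by blast
    show "\<And>y. ramsey_prop (C t1) (Q n) y \<Longrightarrow> n + t1 - 1 \<le> y"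
      using partA_lower[OF assms(2)] not_le by blast
  qed
  show "poset_ramsey (parallel (C t1) (C t2)) (Q n) = n + t1 + 1"
    unfolding poset_ramsey_def
  proof (rule Least_equality)
    show "ramsey_prop (parallel (C t1) (C t2)) (Q n) (n + t1 + 1)" using partB_upper assms(2,4) by blast
    show "\<And>y. ramsey_prop (parallel (C t1) (C t2)) (Q n) y \<Longrightarrow> n + t1 + 1 \<le> y"
      using partB_lower[OF assms(2,3)] not_le by blast
  qed
qed

end
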